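(* Let $L$ be a frame. The map $\nu(F)=\bigcap_{a\in F}\mathfrak o(a)$ restricts to an order isomorphism from $(\mathsf{Ex}(L),\sqsubseteq)$ onto $(\{\mathrm{fit}(S)\mid S\in\mathcal S_b(L)\},\subseteq)$, with inverse $S\mapsto\{a\in L\mid S\subseteq\mathfrak o(a)\}$.
   Context: A frame is a complete lattice $L$ with $(\bigvee A)\wedge b=\bigvee_{a\in A}(a\wedge b)$, Heyting implication $\to$. A sublocale is a subset $S\subseteq L$ closed under all meets with $a\to s\in S$ for $a\in L,s\in S$; the sublocales form a coframe $\mathsf{Sl}(L)$ under inclusion, with meets intersections and joins $\bigvee_i S_i=\{\bigwedge A\mid A\subseteq\bigcup_i S_i\}$. $\mathfrak o(a)=\{a\to b\mid b\in L\}$ (open sublocale), $\mathfrak c(a)={\uparrow}a$ (closed sublocale). $\mathrm{fit}(S)=\bigcap\{\mathfrak o(a)\mid S\subseteq\mathfrak o(a)\}$. A smooth sublocale is a join in $\mathsf{Sl}(L)$ of sublocales of the form $\mathfrak c(x)\cap\mathfrak o(y)$; $\mathcal S_b(L)$ is the set of smooth sublocales. Filters are nonempty up-closed subsets closed under finite meets, ordered by reverse inclusion $\sqsubseteq$. $\mathsf{Ex}(L)$ is the set of filters containing every exact meet of their subsets, where $\bigwedge M$ is exact if $(\bigwedge M)\vee b=\bigwedge_{a\in M}(a\vee b)$ for all $b$. *)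

theory Defs
  imports Main
begin

definition is_frame :: "'a::complete_lattice itself \<Rightarrow> bool" where
  "is_frame _ \<longleftrightarrow> (\<forall>(A::'a set) b. inf (Sup A) b = (SUP a\<in>A. inf a b))"

definition himp :: "'a::complete_lattice \<Rightarrow> 'a \<Rightarrow> 'a" where
  "himp a b = Sup {c. inf c a \<le> b}"

definition is_sublocale :: "'a::complete_lattice set \<Rightarrow> bool" where
  "is_sublocale S \<longleftrightarrow> (\<forall>M. M \<subseteq> S \<longrightarrow> Inf M \<in> S) \<and> (\<forall>a. \<forall>s\<in>S. himp a s \<in> S)"

text \<open>Join in the coframe of sublocales of a family of sublocales.\<close>
definition sl_join :: "'a::complete_lattice set set \<Rightarrow> 'a set" where
  "sl_join \<F> = {Inf A | A. A \<subseteq> \<Union>\<F>}"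

definition open_sl :: "'a::complete_lattice \<Rightarrow> 'a set" where
  "open_sl a = {himp a b | b. True}"

definition closed_sl :: "'a::complete_lattice \<Rightarrow> 'a set" where
  "closed_sl a = {b. a \<le> b}"

definition fit :: "'a::complete_lattice set \<Rightarrow> 'a set" where
  "fit S = \<Inter>{open_sl a | a. S \<subseteq> open_sl a}"

definition smooth_sublocales :: "'a::complete_lattice set set" where
  "smooth_sublocales = {sl_join \<F> | \<F>. \<F> \<subseteq> {closed_sl x \<inter> open_sl y | x y. True}}"

definition is_filter :: "'a::complete_lattice set \<Rightarrow> bool" where
  "is_filter F \<longleftrightarrow> F \<noteq> {} \<and> (\<forall>a b. a \<in> F \<longrightarrow> a \<le> b \<longrightarrow> b \<in> F)
     \<and> (\<forall>a\<in>F. \<forall>b\<in>F. inf a b \<in> F)"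

definition exact_meet :: "'a::complete_lattice set \<Rightarrow> bool" where
  "exact_meet M \<longleftrightarrow> (\<forall>b. sup (Inf M) b = (INF a\<in>M. sup a b))"

definition exact_filters :: "'a::complete_lattice set set" where
  "exact_filters = {F. is_filter F \<and> (\<forall>M. M \<subseteq> F \<longrightarrow> exact_meet M \<longrightarrow> Inf M \<in> F)}"

definition nu :: "'a::complete_lattice set \<Rightarrow> 'a set" where
  "nu F = (\<Inter>a\<in>F. open_sl a)"

definition nu_inv :: "'a::complete_lattice set \<Rightarrow> 'a set" where
  "nu_inv S = {a. S \<subseteq> open_sl a}"

end

theory Submission imports Defs begin

context
  assumes FR: "\<And>(A::'a::complete_lattice set) b. inf (Sup A) b = (SUP a\<in>A. inf a b)"
begin

lemma distr: "inf (x::'a) (sup y z) = sup (inf x y) (inf x z)"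
proof -
  have "inf (Sup {y,z}) x = (SUP a\<in>{y,z}. inf a x)" by (rule FR)
  then show ?thesis by (simp add: inf_commute)
qed

lemma himp_iff: "(c::'a) \<le> himp a b \<longleftrightarrow> inf c a \<le> b"
proof
  assume "c \<le> himp a b"
  then have "inf c a \<le> inf (himp a b) a" by (rule inf_mono) simp
  also have "\<dots> = (SUP d\<in>{d. inf d a \<le> b}. inf d a)" unfolding himp_def by (rule FR)
  also have "\<dots> \<le> b" by (rule SUP_least) simp
  finally show "inf c a \<le> b" .
next
  assume "inf c a \<le> b" then show "c \<le> himp a b" unfolding himp_def by (simp add: Sup_upper)
qed

lemma le_ext: "(\<And>c::'a. c \<le> x \<longleftrightarrow> c \<le> y) \<Longrightarrow> x = y"
  by (meson order.antisym order_refl)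

lemma himp_ge: "(b::'a) \<le> himp a b" by (simp add: himp_iff)

lemma himp_top: "himp a (b::'a) = top \<longleftrightarrow> a \<le> b"
  by (metis himp_iff inf_top_left top.extremum_unique)

lemma himp_idem: "himp a (himp a (b::'a)) = himp a b"
  by (rule le_ext) (simp add: himp_iff inf.assoc)

lemma open_eq: "open_sl a = {s::'a. himp a s = s}"
  unfolding open_sl_def using himp_idem by (auto, metis)

lemma himp_mono2: "(b::'a) \<le> b' \<Longrightarrow> himp a b \<le> himp a b'"
proof -
  assume bb: "b \<le> b'"
  have "inf (himp a b) a \<le> b" using himp_iff[of "himp a b" a b] by simp
  then have "inf (himp a b) a \<le> b'" using bb by (rule order_trans)
  then show ?thesis using himp_iff[of "himp a b" a b'] by simp
qed

lemma himp_anti1: "(a::'a) \<le> a' \<Longrightarrow> himp a' b \<le> himp a b"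
proof -
  assume aa: "a \<le> a'"
  have "inf (himp a' b) a' \<le> b" using himp_iff[of "himp a' b" a' b] by simp
  moreover have "inf (himp a' b) a \<le> inf (himp a' b) a'" using aa by (simp add: inf.coboundedI2)
  ultimately have "inf (himp a' b) a \<le> b" by (rule order_trans[rotated])
  then show ?thesis using himp_iff[of "himp a' b" a b] by simp
qed

lemma CO: "closed_sl x \<inter> open_sl y \<subseteq> open_sl a \<longleftrightarrow> (y::'a) \<le> sup a x"
proof
  assume H: "closed_sl x \<inter> open_sl y \<subseteq> open_sl a"
  let ?s = "himp y (sup a x)"
  have "x \<le> ?s" using himp_ge[of "sup a x" y] by (meson order_trans sup_ge2)
  moreover have "himp y ?s = ?s" by (rule himp_idem)
  ultimately have "himp a ?s = ?s" using H unfolding open_eq closed_sl_def by auto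
  moreover have "a \<le> ?s" using himp_ge[of "sup a x" y] by (meson order_trans sup_ge1)
  ultimately have "?s = top" using himp_top by metis
  then show "y \<le> sup a x" using himp_top by metis
next
  assume Y: "y \<le> sup a x"
  show "closed_sl x \<inter> open_sl y \<subseteq> open_sl a"
  proof
    fix s assume "s \<in> closed_sl x \<inter> open_sl y"
    then have xs: "x \<le> s" and ys: "himp y s = s" unfolding open_eq closed_sl_def by auto
    let ?h = "himp a s"
    have "inf ?h y \<le> inf ?h (sup a x)" using Y by (simp add: inf.coboundedI2)
    also have "\<dots> = sup (inf ?h a) (inf ?h x)" by (rule distr)
    also have "\<dots> \<le> s" using xs himp_iff[of ?h a s] by (simp add: le_infI2)
    finally have "?h \<le> himp y s" by (simp add: himp_iff)
    then have "?h = s" using ys himp_ge[of s a] by simp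
    then show "s \<in> open_sl a" unfolding open_eq by simp
  qed
qed

lemma open_Inf: "M \<subseteq> open_sl a \<Longrightarrow> Inf M \<in> open_sl (a::'a)"
  unfolding open_eq
  apply (simp, rule order.antisym)
   apply (rule Inf_greatest)
   apply (metis (mono_tags, lifting) Inf_lower himp_mono2 mem_Collect_eq subset_eq)
  by (rule himp_ge)

lemma sl_join_sub: "sl_join F \<subseteq> open_sl (a::'a) \<longleftrightarrow> (\<forall>X\<in>F. X \<subseteq> open_sl a)"
proof
  assume H: "sl_join F \<subseteq> open_sl a"
  show "\<forall>X\<in>F. X \<subseteq> open_sl a"
  proof (intro ballI subsetI)
    fix X s assume "X \<in> F" "s \<in> X"
    then have "Inf {s} \<in> sl_join F" unfolding sl_join_def by blast
    then show "s \<in> open_sl a" using H by auto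
  qed
next
  assume "\<forall>X\<in>F. X \<subseteq> open_sl a"
  then show "sl_join F \<subseteq> open_sl a" unfolding sl_join_def using open_Inf by blast
qed

lemma open_top: "open_sl (top::'a) = UNIV"
  unfolding open_eq by (auto intro!: le_ext simp: himp_iff)

lemma open_mono: "(a::'a) \<le> b \<Longrightarrow> open_sl a \<subseteq> open_sl b"
  unfolding open_eq using himp_anti1 himp_ge by (auto intro: order.antisym) (metis order.antisym)

lemma open_inf: "open_sl a \<inter> open_sl b \<subseteq> open_sl (inf a (b::'a))"
proof
  fix s assume "s \<in> open_sl a \<inter> open_sl b"
  then have A: "himp a s = s" "himp b s = s" unfolding open_eq by auto
  have "himp (inf a b) s = s"
    by (rule le_ext) (metis A himp_iff inf.assoc inf.commute)
  then show "s \<in> open_sl (inf a b)" unfolding open_eq by simp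
qed

lemma nu_inv_filter: "is_filter (nu_inv (S::'a set))"
  unfolding is_filter_def nu_inv_def
  using open_top open_mono open_inf by blast


lemma keyP:
  assumes F: "F \<in> exact_filters" and a: "(a::'a) \<notin> F"
  shows "\<exists>x y. (\<forall>f\<in>F. y \<le> sup f x) \<and> \<not> y \<le> sup a x"
proof (rule ccontr)
  assume N: "\<not> ?thesis"
  have up: "\<And>f g. f \<in> F \<Longrightarrow> f \<le> g \<Longrightarrow> g \<in> F" using F
    unfolding exact_filters_def is_filter_def by blast
  have B: "Inf {f\<in>F. b \<le> f} \<le> b" if "a \<le> b" for b
  proof -
    have "\<forall>f\<in>F. Inf {f\<in>F. b \<le> f} \<le> sup f b"
      using up by (auto intro!: Inf_lower)
    then have "Inf {f\<in>F. b \<le> f} \<le> sup a b" using N by blast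
    then show ?thesis using that by (simp add: sup_absorb2)
  qed
  define M where "M = {f\<in>F. a \<le> f}"
  have IM: "Inf M = a" unfolding M_def using B[of a]
    by (auto intro!: order.antisym Inf_greatest)
  have "exact_meet M" unfolding exact_meet_def
  proof
    fix c
    show "sup (Inf M) c = (INF f\<in>M. sup f c)"
    proof (rule order.antisym)
      show "sup (Inf M) c \<le> (INF f\<in>M. sup f c)" unfolding IM
        by (rule INF_greatest) (auto simp: M_def intro: le_supI1)
      have "(INF f\<in>M. sup f c) \<le> Inf {f\<in>F. sup a c \<le> f}"
      proof (rule Inf_greatest)
        fix g assume "g \<in> {f\<in>F. sup a c \<le> f}"
        then have "g \<in> M" "sup g c = g" unfolding M_def by (auto simp: sup_absorb1)
        then show "(INF f\<in>M. sup f c) \<le> g" by (metis INF_lower)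
      qed
      also have "\<dots> \<le> sup a c" by (rule B) simp
      finally show "(INF f\<in>M. sup f c) \<le> sup (Inf M) c" unfolding IM .
    qed
  qed
  moreover have "M \<subseteq> F" unfolding M_def by auto
  ultimately have "Inf M \<in> F" using F unfolding exact_filters_def by blast
  then show False using a IM by simp
qed

lemma nu_inv_nu:
  assumes F: "F \<in> exact_filters"
  shows "nu_inv (nu F) = (F::'a set)"
proof
  show "F \<subseteq> nu_inv (nu F)" unfolding nu_inv_def nu_def by auto
  show "nu_inv (nu F) \<subseteq> F"
  proof
    fix a assume A: "a \<in> nu_inv (nu F)"
    show "a \<in> F"
    proof (rule ccontr)
      assume "a \<notin> F"
      then obtain x y where H: "\<forall>f\<in>F. y \<le> sup f x" "\<not> y \<le> sup a x" using keyP F by blast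
      have "closed_sl x \<inter> open_sl y \<subseteq> nu F" unfolding nu_def
      proof (rule INT_greatest)
        fix f assume "f \<in> F"
        then have "y \<le> sup f x" using H(1) by simp
        then show "closed_sl x \<inter> open_sl y \<subseteq> open_sl f" using CO[of x y f] by simp
      qed
      also have "\<dots> \<subseteq> open_sl a" using A unfolding nu_inv_def by simp
      finally have "closed_sl x \<inter> open_sl y \<subseteq> open_sl a" .
      then show False using CO[of x y a] H(2) by simp
    qed
  qed
qed

lemma smooth_exact:
  assumes S: "S \<in> smooth_sublocales"
  shows "nu_inv (S::'a set) \<in> exact_filters"
proof -
  obtain G where G: "S = sl_join G" "G \<subseteq> {closed_sl x \<inter> open_sl y | x y. True}"
    using S unfolding smooth_sublocales_def by blast
  have ex: "Inf M \<in> nu_inv S" if M: "M \<subseteq> nu_inv S" "exact_meet M" for M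
  proof -
    have "\<forall>X\<in>G. X \<subseteq> open_sl (Inf M)"
    proof
      fix X assume XG: "X \<in> G"
      then obtain x y where X: "X = closed_sl x \<inter> open_sl y" using G by blast
      have "\<forall>m\<in>M. y \<le> sup m x"
      proof
        fix m assume "m \<in> M"
        then have "S \<subseteq> open_sl m" using M(1) unfolding nu_inv_def by auto
        then have "X \<subseteq> open_sl m" using XG sl_join_sub[of G m] G(1) by simp
        then show "y \<le> sup m x" using X CO[of x y m] by simp
      qed
      then have "y \<le> (INF m\<in>M. sup m x)" by (simp add: INF_greatest)
      also have "\<dots> = sup (Inf M) x" using M(2) unfolding exact_meet_def by simp
      finally show "X \<subseteq> open_sl (Inf M)" using X CO[of x y "Inf M"] by simp
    qed
    then show ?thesis unfolding nu_inv_def G(1) sl_join_sub by simp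
  qed
  show ?thesis using ex nu_inv_filter[of S] by (simp add: exact_filters_def)
qed

lemma fit_eq: "fit S = nu (nu_inv S)"
  unfolding fit_def nu_def nu_inv_def by auto

lemma nu_inv_fit: "nu_inv (fit S) = nu_inv S"
  unfolding fit_def nu_inv_def by auto

lemma exists_smooth:
  assumes F: "F \<in> exact_filters"
  shows "\<exists>S\<in>smooth_sublocales. fit S = nu (F::'a set)"
proof -
  define G where "G = {closed_sl x \<inter> open_sl y | x y. \<forall>f\<in>F. (y::'a) \<le> sup f x}"
  define S where "S = sl_join G"
  have "S \<in> smooth_sublocales" unfolding S_def smooth_sublocales_def G_def by blast
  moreover have "nu_inv S = F"
  proof
    show "F \<subseteq> nu_inv S"
    proof
      fix a assume aF: "a \<in> F"
      have "\<forall>X\<in>G. X \<subseteq> open_sl a"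
      proof
        fix X assume "X \<in> G"
        then obtain x y where X: "X = closed_sl x \<inter> open_sl y" "\<forall>f\<in>F. y \<le> sup f x"
          unfolding G_def by blast
        then show "X \<subseteq> open_sl a" using aF CO[of x y a] by simp
      qed
      then show "a \<in> nu_inv S" unfolding nu_inv_def S_def sl_join_sub by simp
    qed
    show "nu_inv S \<subseteq> F"
    proof
      fix a assume A: "a \<in> nu_inv S"
      show "a \<in> F"
      proof (rule ccontr)
        assume "a \<notin> F"
        then obtain x y where H: "\<forall>f\<in>F. y \<le> sup f x" "\<not> y \<le> sup a x" using keyP F by blast
        have "closed_sl x \<inter> open_sl y \<in> G" unfolding G_def using H(1) by blast
        then have "closed_sl x \<inter> open_sl y \<subseteq> open_sl a"
          using A unfolding nu_inv_def S_def sl_join_sub by simp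
        then show False using CO[of x y a] H(2) by simp
      qed
    qed
  qed
  ultimately show ?thesis using fit_eq[of S] by auto
qed

end

theorem mainTheorem12:
  fixes L :: "'a::complete_lattice itself"
  assumes "is_frame L"
  shows "bij_betw (nu :: 'a set \<Rightarrow> 'a set) exact_filters {fit S | S. S \<in> smooth_sublocales}
    \<and> (\<forall>F\<in>(exact_filters :: 'a set set). \<forall>G\<in>exact_filters. (G \<subseteq> F) \<longleftrightarrow> nu F \<subseteq> nu G)
    \<and> (\<forall>T\<in>{fit S | S. S \<in> (smooth_sublocales :: 'a set set)}. nu_inv T \<in> exact_filters \<and> nu (nu_inv T) = T)
    \<and> (\<forall>F\<in>(exact_filters :: 'a set set). nu_inv (nu F) = F)"
proof -
  have FR: "\<And>(A::'a set) b. inf (Sup A) b = (SUP a\<in>A. inf a b)"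
    using assms unfolding is_frame_def by blast
  note NN = nu_inv_nu[OF FR]
  have P3: "\<forall>T\<in>{fit S | S. S \<in> (smooth_sublocales :: 'a set set)}. nu_inv T \<in> exact_filters \<and> nu (nu_inv T) = T"
  proof
    fix T assume "T \<in> {fit S | S. S \<in> (smooth_sublocales :: 'a set set)}"
    then obtain S where S: "T = fit S" "S \<in> smooth_sublocales" by blast
    have "nu_inv T = nu_inv S" using S(1) nu_inv_fit[OF FR] by simp
    then show "nu_inv T \<in> exact_filters \<and> nu (nu_inv T) = T"
      using smooth_exact[OF FR S(2)] S(1) fit_eq[OF FR, of S] by simp
  qed
  have P2: "\<forall>F\<in>(exact_filters :: 'a set set). \<forall>G\<in>exact_filters. (G \<subseteq> F) \<longleftrightarrow> nu F \<subseteq> nu G"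
  proof (intro ballI iffI)
    fix F G :: "'a set" assume "G \<subseteq> F" then show "nu F \<subseteq> nu G" unfolding nu_def by auto
  next
    fix F G :: "'a set" assume FG: "F \<in> exact_filters" "G \<in> exact_filters" "nu F \<subseteq> nu G"
    have "nu_inv (nu G) \<subseteq> nu_inv (nu F)" using FG(3) unfolding nu_inv_def by auto
    then show "G \<subseteq> F" using NN FG by simp
  qed
  have P1: "bij_betw (nu :: 'a set \<Rightarrow> 'a set) exact_filters {fit S | S. S \<in> smooth_sublocales}"
    unfolding bij_betw_def
  proof
    show "inj_on nu (exact_filters :: 'a set set)" by (metis NN inj_onI)
    show "nu ` exact_filters = {fit S |S. S \<in> (smooth_sublocales :: 'a set set)}"
    proof
      show "nu ` exact_filters \<subseteq> {fit S |S. S \<in> (smooth_sublocales :: 'a set set)}"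
      proof
        fix T :: "'a set" assume "T \<in> nu ` exact_filters"
        then obtain F where "F \<in> exact_filters" "T = nu F" by blast
        then show "T \<in> {fit S |S. S \<in> (smooth_sublocales :: 'a set set)}"
          using exists_smooth[OF FR] by (metis (mono_tags, lifting) mem_Collect_eq)
      qed
      show "{fit S |S. S \<in> (smooth_sublocales :: 'a set set)} \<subseteq> nu ` exact_filters"
      proof
        fix T assume T: "T \<in> {fit S |S. S \<in> (smooth_sublocales :: 'a set set)}"
        then have "nu_inv T \<in> exact_filters" "nu (nu_inv T) = T" using P3 by auto
        then show "T \<in> nu ` exact_filters" by (metis image_eqI)
      qed
    qed
  qed
  have P4: "\<forall>F\<in>(exact_filters :: 'a set set). nu_inv (nu F) = F" using NN by blast
  show ?thesis by (rule conjI[OF P1 conjI[OF P2 conjI[OF P3 P4]]])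
qed

end
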